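(* Let $G$ be any group and let $\nu(G)$ be the group described in the context. Then: (i) for every $n\geq 0$, $[G,G^\varphi]^{(n)}=[G^{(n)},(G^{(n)})^\varphi]$ (computed inside $\nu(G)$); (ii) for every $n\geq 1$, $\gamma_{n+1}([G,G^\varphi])=[\gamma_{n}(G'),G'^{\varphi}]=[G',\gamma_{n}(G')^{\varphi}]$ (computed inside $\nu(G)$).
   Context: Conventions: ${}^gh=ghg^{-1}$ and $[g,h]=ghg^{-1}h^{-1}$. For a group $G$ let $G^\varphi$ be an isomorphic copy of $G$ via an isomorphism $\varphi:G\to G^\varphi$, $g\mapsto g^\varphi$. The group $\nu(G)$ is the quotient of the free product $G\ast G^\varphi$ by the normal subgroup generated by all words ${}^{g_3}[g_1,g_2^\varphi]\cdot[{}^{g_3}g_1,({}^{g_3}g_2)^\varphi]^{-1}$ and ${}^{g_3^\varphi}[g_1,g_2^\varphi]\cdot[{}^{g_3}g_1,({}^{g_3}g_2)^\varphi]^{-1}$, for all $g_1,g_2,g_3\in G$. For subgroups $A,B\le G$, $[A,B^\varphi]$ denotes the subgroup of $\nu(G)$ generated by all $[a,b^\varphi]$, $a\in A$, $b\in B$. The subgroup $[G,G^\varphi]$ is isomorphic to the non-abelian tensor square $G\otimes G$ of Brown and Loday. $G^{(n)}$ denotes the $n$-th derived subgroup ($G^{(0)}=G$), $\gamma_n$ the $n$-th term of the lower central series ($\gamma_1(H)=H$), and $G'=G^{(1)}$. *)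

theory Defs
  imports "HOL-Algebra.Algebra"
begin

definition comm_set :: "('a, 'b) monoid_scheme \<Rightarrow> 'a set \<Rightarrow> 'a set \<Rightarrow> 'a set" where
  "comm_set G A B = (\<Union>a\<in>A. \<Union>b\<in>B. {a \<otimes>\<^bsub>G\<^esub> b \<otimes>\<^bsub>G\<^esub> inv\<^bsub>G\<^esub> a \<otimes>\<^bsub>G\<^esub> inv\<^bsub>G\<^esub> b})"

definition comm_subgroup :: "('a, 'b) monoid_scheme \<Rightarrow> 'a set \<Rightarrow> 'a set \<Rightarrow> 'a set" where
  "comm_subgroup G A B = generate G (comm_set G A B)"

text \<open>Lower central series: lcs G H 1 = H, lcs G H (n+1) = [lcs G H n, H].
  (lcs G H 0 = H as well; it is never used.)\<close>
fun lcs :: "('a, 'b) monoid_scheme \<Rightarrow> 'a set \<Rightarrow> nat \<Rightarrow> 'a set" where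
  "lcs G H 0 = H"
| "lcs G H (Suc 0) = H"
| "lcs G H (Suc (Suc n)) = comm_subgroup G (lcs G H (Suc n)) H"

definition derived_iter :: "('a, 'b) monoid_scheme \<Rightarrow> nat \<Rightarrow> 'a set \<Rightarrow> 'a set" where
  "derived_iter G n H = (derived G ^^ n) H"

text \<open>Letters: (g, s) with g in G; s = False means g lies in the copy G,
  s = True means the letter is g^phi in the copy G^phi.  The free product
  G * G^phi is the monoid presented on these letters by the relations
  (g,s)(h,s) = (gh,s) and (1,s) = empty word; nu(G) adds the defining relations.\<close>

type_synonym 'a nuword = "('a \<times> bool) list"

definition nu_words :: "('a, 'b) monoid_scheme \<Rightarrow> 'a nuword set" where
  "nu_words G = {w. set w \<subseteq> carrier G \<times> UNIV}"

definition winv :: "('a, 'b) monoid_scheme \<Rightarrow> 'a nuword \<Rightarrow> 'a nuword" where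
  "winv G w = rev (map (\<lambda>(g, s). (inv\<^bsub>G\<^esub> g, s)) w)"

definition wconj :: "('a, 'b) monoid_scheme \<Rightarrow> 'a nuword \<Rightarrow> 'a nuword \<Rightarrow> 'a nuword" where
  "wconj G x y = x @ y @ winv G x"

definition wcomm :: "('a, 'b) monoid_scheme \<Rightarrow> 'a nuword \<Rightarrow> 'a nuword \<Rightarrow> 'a nuword" where
  "wcomm G x y = x @ y @ winv G x @ winv G y"

inductive nu_eqv :: "('a, 'b) monoid_scheme \<Rightarrow> 'a nuword \<Rightarrow> 'a nuword \<Rightarrow> bool"
  for G where
  refl: "w \<in> nu_words G \<Longrightarrow> nu_eqv G w w"
| sym: "nu_eqv G v w \<Longrightarrow> nu_eqv G w v"
| trans: "nu_eqv G u v \<Longrightarrow> nu_eqv G v w \<Longrightarrow> nu_eqv G u w"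
| ctxt: "nu_eqv G v w \<Longrightarrow> x \<in> nu_words G \<Longrightarrow> y \<in> nu_words G
          \<Longrightarrow> nu_eqv G (x @ v @ y) (x @ w @ y)"
| mult: "g \<in> carrier G \<Longrightarrow> h \<in> carrier G
          \<Longrightarrow> nu_eqv G [(g, s), (h, s)] [(g \<otimes>\<^bsub>G\<^esub> h, s)]"
| one: "nu_eqv G [(\<one>\<^bsub>G\<^esub>, s)] []"
| rel1: "g1 \<in> carrier G \<Longrightarrow> g2 \<in> carrier G \<Longrightarrow> g3 \<in> carrier G \<Longrightarrow>
          nu_eqv G (wconj G [(g3, False)] (wcomm G [(g1, False)] [(g2, True)]))
                   (wcomm G [(g3 \<otimes>\<^bsub>G\<^esub> g1 \<otimes>\<^bsub>G\<^esub> inv\<^bsub>G\<^esub> g3, False)]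
                            [(g3 \<otimes>\<^bsub>G\<^esub> g2 \<otimes>\<^bsub>G\<^esub> inv\<^bsub>G\<^esub> g3, True)])"
| rel2: "g1 \<in> carrier G \<Longrightarrow> g2 \<in> carrier G \<Longrightarrow> g3 \<in> carrier G \<Longrightarrow>
          nu_eqv G (wconj G [(g3, True)] (wcomm G [(g1, False)] [(g2, True)]))
                   (wcomm G [(g3 \<otimes>\<^bsub>G\<^esub> g1 \<otimes>\<^bsub>G\<^esub> inv\<^bsub>G\<^esub> g3, False)]
                            [(g3 \<otimes>\<^bsub>G\<^esub> g2 \<otimes>\<^bsub>G\<^esub> inv\<^bsub>G\<^esub> g3, True)])"

definition nu_class :: "('a, 'b) monoid_scheme \<Rightarrow> 'a nuword \<Rightarrow> 'a nuword set" where
  "nu_class G w = {v. nu_eqv G w v}"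

definition nu :: "('a, 'b) monoid_scheme \<Rightarrow> 'a nuword set monoid" where
  "nu G = \<lparr> carrier = nu_class G ` nu_words G,
            monoid.mult = (\<lambda>A B. nu_class G ((SOME a. a \<in> A) @ (SOME b. b \<in> B))),
            one = nu_class G [] \<rparr>"

definition nu_inc :: "('a, 'b) monoid_scheme \<Rightarrow> 'a \<Rightarrow> 'a nuword set" where
  "nu_inc G g = nu_class G [(g, False)]"

definition nu_phi :: "('a, 'b) monoid_scheme \<Rightarrow> 'a \<Rightarrow> 'a nuword set" where
  "nu_phi G g = nu_class G [(g, True)]"

definition nu_tensor :: "('a, 'b) monoid_scheme \<Rightarrow> 'a set \<Rightarrow> 'a set \<Rightarrow> 'a nuword set set" where
  "nu_tensor G A B = generate (nu G)
     (\<Union>a\<in>A. \<Union>b\<in>B. {nu_inc G a \<otimes>\<^bsub>nu G\<^esub> nu_phi G b \<otimes>\<^bsub>nu G\<^esub>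
                       inv\<^bsub>nu G\<^esub> (nu_inc G a) \<otimes>\<^bsub>nu G\<^esub> inv\<^bsub>nu G\<^esub> (nu_phi G b)})"

end

theory Submission
  imports Defs
begin
definition cj :: "('a, 'b) monoid_scheme \<Rightarrow> 'a \<Rightarrow> 'a \<Rightarrow> 'a" where
  "cj G x y = x \<otimes>\<^bsub>G\<^esub> y \<otimes>\<^bsub>G\<^esub> inv\<^bsub>G\<^esub> x"

definition cm :: "('a, 'b) monoid_scheme \<Rightarrow> 'a \<Rightarrow> 'a \<Rightarrow> 'a" where
  "cm G x y = x \<otimes>\<^bsub>G\<^esub> y \<otimes>\<^bsub>G\<^esub> inv\<^bsub>G\<^esub> x \<otimes>\<^bsub>G\<^esub> inv\<^bsub>G\<^esub> y"

context group begin

lemma inv_cancel_left1[simp]: "x \<in> carrier G \<Longrightarrow> y \<in> carrier G \<Longrightarrow> x \<otimes> (inv x \<otimes> y) = y"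
  by (simp flip: m_assoc)
lemma inv_cancel_left2[simp]: "x \<in> carrier G \<Longrightarrow> y \<in> carrier G \<Longrightarrow> inv x \<otimes> (x \<otimes> y) = y"
  by (simp flip: m_assoc)

lemmas gsimps = m_assoc inv_mult_group cj_def cm_def

lemma cj_closed[simp]: "x \<in> carrier G \<Longrightarrow> y \<in> carrier G \<Longrightarrow> cj G x y \<in> carrier G"
  by (simp add: cj_def)
lemma cm_closed[simp]: "x \<in> carrier G \<Longrightarrow> y \<in> carrier G \<Longrightarrow> cm G x y \<in> carrier G"
  by (simp add: cm_def)
lemma cj_mult: "x \<in> carrier G \<Longrightarrow> a \<in> carrier G \<Longrightarrow> b \<in> carrier G \<Longrightarrow> cj G x (a \<otimes> b) = cj G x a \<otimes> cj G x b"
  by (simp add: gsimps)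
lemma cj_inv: "x \<in> carrier G \<Longrightarrow> a \<in> carrier G \<Longrightarrow> cj G x (inv a) = inv (cj G x a)"
  by (simp add: gsimps)
lemma cj_cj: "x \<in> carrier G \<Longrightarrow> y \<in> carrier G \<Longrightarrow> a \<in> carrier G \<Longrightarrow> cj G (x \<otimes> y) a = cj G x (cj G y a)"
  by (simp add: gsimps)
lemma cj_one[simp]: "a \<in> carrier G \<Longrightarrow> cj G \<one> a = a"
  by (simp add: gsimps)
lemma cj_inv_cj[simp]: "x \<in> carrier G \<Longrightarrow> a \<in> carrier G \<Longrightarrow> cj G x (cj G (inv x) a) = a"
  by (simp add: gsimps)
lemma cj_inv_cj'[simp]: "x \<in> carrier G \<Longrightarrow> a \<in> carrier G \<Longrightarrow> cj G (inv x) (cj G x a) = a"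
  by (simp add: gsimps)
lemma cm_mult1: "x \<in> carrier G \<Longrightarrow> y \<in> carrier G \<Longrightarrow> z \<in> carrier G \<Longrightarrow>
   cm G (x \<otimes> y) z = cj G x (cm G y z) \<otimes> cm G x z"
  by (simp add: gsimps)
lemma cm_mult2: "x \<in> carrier G \<Longrightarrow> y \<in> carrier G \<Longrightarrow> z \<in> carrier G \<Longrightarrow>
   cm G x (y \<otimes> z) = cm G x y \<otimes> cj G y (cm G x z)"
  by (simp add: gsimps)
lemma cm_inv1: "x \<in> carrier G \<Longrightarrow> z \<in> carrier G \<Longrightarrow>
   cm G (inv x) z = cj G (inv x) (inv (cm G x z))"
  by (simp add: gsimps)
lemma cm_inv2: "x \<in> carrier G \<Longrightarrow> y \<in> carrier G \<Longrightarrow>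
   cm G x (inv y) = cj G (inv y) (inv (cm G x y))"
  by (simp add: gsimps)
lemma cm_eq: "x \<in> carrier G \<Longrightarrow> y \<in> carrier G \<Longrightarrow> cm G x y = x \<otimes> cj G y (inv x)"
  by (simp add: gsimps)
lemma cm_swap: "x \<in> carrier G \<Longrightarrow> y \<in> carrier G \<Longrightarrow> inv (cm G x y) = cm G y x"
  by (simp add: gsimps)
lemma cm_cj: "g \<in> carrier G \<Longrightarrow> a \<in> carrier G \<Longrightarrow> b \<in> carrier G \<Longrightarrow>
   cj G g (cm G a b) = cm G (cj G g a) (cj G g b)"
  by (simp add: gsimps)
lemma cm_one1[simp]: "z \<in> carrier G \<Longrightarrow> cm G \<one> z = \<one>"
  by (simp add: gsimps)
lemma cm_one2[simp]: "z \<in> carrier G \<Longrightarrow> cm G z \<one> = \<one>"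
  by (simp add: gsimps)


lemma generate_cj_closed:
  assumes S: "S \<subseteq> carrier G" and x: "x \<in> carrier G"
    and cl: "\<And>s. s \<in> S \<Longrightarrow> cj G x s \<in> generate G S"
    and y: "y \<in> generate G S"
  shows "cj G x y \<in> generate G S"
  using y
proof (induct rule: generate.induct)
  case one then show ?case using x by (simp add: generate.one gsimps)
next
  case (incl h) then show ?case using cl by blast
next
  case (inv h) then show ?case using cl S x
    by (simp add: cj_inv subsetD generate_m_inv_closed)
next
  case (eng h1 h2) then show ?case using S x
    by (simp add: cj_mult generate_in_carrier generate.eng)
qed

lemma normal_cj: "D \<lhd> G \<Longrightarrow> x \<in> carrier G \<Longrightarrow> d \<in> D \<Longrightarrow> cj G x d \<in> D"
  unfolding cj_def by (rule normal.inv_op_closed2)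

lemma normal_from_gen:
  assumes gen: "carrier G = generate G S" and S: "S \<subseteq> carrier G"
    and Sinv: "\<And>s. s \<in> S \<Longrightarrow> inv s \<in> S"
    and D: "subgroup D G" and cl: "\<And>s d. s \<in> S \<Longrightarrow> d \<in> D \<Longrightarrow> cj G s d \<in> D"
  shows "D \<lhd> G"
proof -
  have "\<forall>d\<in>D. cj G g d \<in> D" if g: "g \<in> generate G S" for g
    using g
  proof (induct rule: generate.induct)
    case one then show ?case using D by (auto simp: subgroup.mem_carrier)
  next
    case (incl h) then show ?case using cl by blast
  next
    case (inv h) then show ?case using cl Sinv by blast
  next
    case (eng h1 h2)
    have "h1 \<in> carrier G" "h2 \<in> carrier G" using eng gen by auto
    then show ?case using eng D by (auto simp: cj_cj subgroup.mem_carrier)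
  qed
  then show ?thesis using gen
    by (intro normal_invI[OF D]) (auto simp: cj_def)
qed

lemma comm_subgroup_normal:
  assumes A: "A \<lhd> G" and B: "B \<lhd> G"
  shows "comm_subgroup G A B \<lhd> G"
  unfolding comm_subgroup_def
proof (rule normal_generateI)
  have "A \<subseteq> carrier G" "B \<subseteq> carrier G" using A B normal_imp_subgroup subgroup.subset by blast+
  then show "comm_set G A B \<subseteq> carrier G" by (auto simp: comm_set_def subset_iff)
  fix h g assume h: "h \<in> comm_set G A B" and g: "g \<in> carrier G"
  then obtain a b where ab: "a \<in> A" "b \<in> B" "h = cm G a b" by (auto simp: comm_set_def cm_def)
  have c: "a \<in> carrier G" "b \<in> carrier G" using ab \<open>A \<subseteq> carrier G\<close> \<open>B \<subseteq> carrier G\<close> by auto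
  have "g \<otimes> h \<otimes> inv g = cm G (cj G g a) (cj G g b)"
    using cm_cj[OF g c] ab by (simp add: cj_def)
  moreover have "cj G g a \<in> A" "cj G g b \<in> B" using normal_cj[OF A g ab(1)] normal_cj[OF B g ab(2)] .
  ultimately show "g \<otimes> h \<otimes> inv g \<in> comm_set G A B" by (auto simp: comm_set_def cm_def)
qed

lemma comm_gen_incl:
  assumes D: "D \<lhd> G" and XX: "XX \<subseteq> carrier G" and YY: "YY \<subseteq> carrier G"
    and XY: "\<And>x y. x \<in> XX \<Longrightarrow> y \<in> YY \<Longrightarrow> cm G x y \<in> D"
  shows "comm_subgroup G (generate G XX) (generate G YY) \<subseteq> D"
proof -
  have Ds: "subgroup D G" using D normal_imp_subgroup by blast
  have step1: "\<forall>y\<in>YY. cm G u y \<in> D" if u: "u \<in> generate G XX" for u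
    using u
  proof (induct rule: generate.induct)
    case one then show ?case using YY Ds by (auto simp: subgroup.one_closed)
  next
    case (incl h) then show ?case using XY by blast
  next
    case (inv h)
    have "h \<in> carrier G" using inv XX by auto
    moreover have "\<forall>y\<in>YY. y \<in> carrier G" using YY by auto
    ultimately show ?case using XY inv D Ds
      by (auto simp: cm_inv1 intro!: normal_cj subgroup.m_inv_closed[OF Ds])
  next
    case (eng h1 h2)
    have "h1 \<in> carrier G" "h2 \<in> carrier G" using eng XX generate_in_carrier by auto
    then show ?case using eng D Ds YY
      by (auto simp: cm_mult1 subset_iff intro!: normal_cj subgroup.m_closed[OF Ds])
  qed
  have step2: "\<forall>u\<in>generate G XX. cm G u v \<in> D" if v: "v \<in> generate G YY" for v
    using v
  proof (induct rule: generate.induct)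
    case one then show ?case using XX Ds generate_in_carrier by (auto simp: subgroup.one_closed)
  next
    case (incl h) then show ?case using step1 by blast
  next
    case (inv h)
    have "h \<in> carrier G" using inv YY by auto
    moreover have "\<forall>u\<in>generate G XX. u \<in> carrier G" using XX generate_in_carrier by auto
    ultimately show ?case using step1 inv D Ds
      by (auto simp: cm_inv2 intro!: normal_cj subgroup.m_inv_closed[OF Ds])
  next
    case (eng h1 h2)
    have "h1 \<in> carrier G" "h2 \<in> carrier G" using eng YY generate_in_carrier by auto
    then show ?case using eng D Ds XX generate_in_carrier
      by (auto simp: cm_mult2 subset_iff intro!: normal_cj subgroup.m_closed[OF Ds])
  qed
  show ?thesis unfolding comm_subgroup_def
    by (rule generate_subgroup_incl[OF _ Ds]) (use step2 in \<open>auto simp: comm_set_def cm_def\<close>)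
qed

end

context group begin

lemma nu_words_append[simp]: "(v @ w \<in> nu_words G) = (v \<in> nu_words G \<and> w \<in> nu_words G)"
  by (auto simp: nu_words_def)

lemma nu_words_Cons[simp]: "((g,s) # w \<in> nu_words G) = (g \<in> carrier G \<and> w \<in> nu_words G)"
  by (auto simp: nu_words_def)

lemma nu_words_Nil[simp]: "[] \<in> nu_words G"
  by (auto simp: nu_words_def)

lemma winv_Cons[simp]: "winv G ((g,s) # w) = winv G w @ [(inv g, s)]"
  by (simp add: winv_def)

lemma winv_Nil[simp]: "winv G [] = []"
  by (simp add: winv_def)

lemma winv_words: "w \<in> nu_words G \<Longrightarrow> winv G w \<in> nu_words G"
  by (induct w) auto

lemma eqv_words: "nu_eqv G v w \<Longrightarrow> v \<in> nu_words G \<and> w \<in> nu_words G"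
  by (induct rule: nu_eqv.induct) (auto simp: wconj_def wcomm_def)

lemma class_eq: "nu_eqv G v w \<Longrightarrow> nu_class G v = nu_class G w"
  unfolding nu_class_def by (auto intro: nu_eqv.trans nu_eqv.sym)

lemma class_self: "w \<in> nu_words G \<Longrightarrow> w \<in> nu_class G w"
  unfolding nu_class_def by (auto intro: nu_eqv.refl)

lemma eqv_app: "nu_eqv G v v' \<Longrightarrow> nu_eqv G w w' \<Longrightarrow> nu_eqv G (v @ w) (v' @ w')"
proof -
  assume a: "nu_eqv G v v'" and b: "nu_eqv G w w'"
  have "nu_eqv G ([] @ v @ w) ([] @ v' @ w)"
    by (rule nu_eqv.ctxt[OF a]) (use eqv_words[OF b] in auto)
  moreover have "nu_eqv G (v' @ w @ []) (v' @ w' @ [])"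
    by (rule nu_eqv.ctxt[OF b]) (use eqv_words[OF a] in auto)
  ultimately show ?thesis by (auto intro: nu_eqv.trans)
qed

lemma nu_mult: "v \<in> nu_words G \<Longrightarrow> w \<in> nu_words G \<Longrightarrow>
  nu_class G v \<otimes>\<^bsub>nu G\<^esub> nu_class G w = nu_class G (v @ w)"
proof -
  assume v: "v \<in> nu_words G" and w: "w \<in> nu_words G"
  have "(SOME a. a \<in> nu_class G v) \<in> nu_class G v" by (rule someI, rule class_self[OF v])
  hence a: "nu_eqv G v (SOME a. a \<in> nu_class G v)" by (simp add: nu_class_def)
  have "(SOME a. a \<in> nu_class G w) \<in> nu_class G w" by (rule someI, rule class_self[OF w])
  hence b: "nu_eqv G w (SOME a. a \<in> nu_class G w)" by (simp add: nu_class_def)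
  show ?thesis unfolding nu_def by (simp add: class_eq[OF eqv_app[OF a b]])
qed

lemma winv_cancel: "w \<in> nu_words G \<Longrightarrow> nu_eqv G (winv G w @ w) []"
proof (induct w)
  case Nil then show ?case by (auto intro: nu_eqv.refl)
next
  case (Cons x w)
  obtain g s where x: "x = (g,s)" by (cases x)
  have g: "g \<in> carrier G" "w \<in> nu_words G" using Cons x by auto
  have "nu_eqv G [(inv g, s), (g, s)] [(inv g \<otimes> g, s)]" using g by (intro nu_eqv.mult) auto
  hence "nu_eqv G [(inv g, s), (g, s)] [(\<one>, s)]" using g by simp
  hence "nu_eqv G [(inv g, s), (g, s)] []" using g by (auto intro: nu_eqv.trans nu_eqv.one)
  hence "nu_eqv G (winv G w @ [(inv g, s), (g, s)] @ w) (winv G w @ [] @ w)"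
    by (rule nu_eqv.ctxt) (use g winv_words in auto)
  then show ?case using Cons g x by (auto intro: nu_eqv.trans)
qed

lemma nu_carrier: "carrier (nu G) = nu_class G ` nu_words G"
  by (simp add: nu_def)

lemma nu_one: "\<one>\<^bsub>nu G\<^esub> = nu_class G []"
  by (simp add: nu_def)

lemma nu_group: "group (nu G)"
proof (rule groupI)
  fix x y assume "x \<in> carrier (nu G)" "y \<in> carrier (nu G)"
  then show "x \<otimes>\<^bsub>nu G\<^esub> y \<in> carrier (nu G)"
    by (auto simp: nu_carrier nu_mult)
next
  show "\<one>\<^bsub>nu G\<^esub> \<in> carrier (nu G)" by (auto simp: nu_carrier nu_one)
next
  fix x y z assume "x \<in> carrier (nu G)" "y \<in> carrier (nu G)" "z \<in> carrier (nu G)"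
  then show "x \<otimes>\<^bsub>nu G\<^esub> y \<otimes>\<^bsub>nu G\<^esub> z = x \<otimes>\<^bsub>nu G\<^esub> (y \<otimes>\<^bsub>nu G\<^esub> z)"
    by (auto simp: nu_carrier nu_mult)
next
  fix x assume "x \<in> carrier (nu G)"
  then show "\<one>\<^bsub>nu G\<^esub> \<otimes>\<^bsub>nu G\<^esub> x = x"
    by (auto simp: nu_carrier nu_mult nu_one)
next
  fix x assume "x \<in> carrier (nu G)"
  then obtain w where w: "w \<in> nu_words G" "x = nu_class G w" by (auto simp: nu_carrier)
  show "\<exists>y\<in>carrier (nu G). y \<otimes>\<^bsub>nu G\<^esub> x = \<one>\<^bsub>nu G\<^esub>"
    by (rule bexI[of _ "nu_class G (winv G w)"])
       (use w winv_words[OF w(1)] class_eq[OF winv_cancel[OF w(1)]] in \<open>auto simp: nu_carrier nu_mult nu_one\<close>)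
qed

end

locale nu_setting = G: group G + N: group N
  for G :: "('a, 'b) monoid_scheme" (structure) and N :: "('n, 'c) monoid_scheme" +
  fixes i p :: "'a \<Rightarrow> 'n"
  assumes i_hom: "i \<in> hom G N" and p_hom: "p \<in> hom G N"
    and rel1: "\<And>g1 g2 g3. g1 \<in> carrier G \<Longrightarrow> g2 \<in> carrier G \<Longrightarrow> g3 \<in> carrier G \<Longrightarrow>
      cj N (i g3) (cm N (i g1) (p g2)) = cm N (i (cj G g3 g1)) (p (cj G g3 g2))"
    and rel2: "\<And>g1 g2 g3. g1 \<in> carrier G \<Longrightarrow> g2 \<in> carrier G \<Longrightarrow> g3 \<in> carrier G \<Longrightarrow>
      cj N (p g3) (cm N (i g1) (p g2)) = cm N (i (cj G g3 g1)) (p (cj G g3 g2))"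
    and gen: "carrier N = generate N (i ` carrier G \<union> p ` carrier G)"
begin

definition t where "t a b = cm N (i a) (p b)"
definition TT where "TT A B = generate N (\<Union>a\<in>A. \<Union>b\<in>B. {t a b})"

lemma i_gh: "group_hom G N i" by (simp add: group_hom_def group_hom_axioms_def i_hom G.group_axioms N.group_axioms)
lemma p_gh: "group_hom G N p" by (simp add: group_hom_def group_hom_axioms_def p_hom G.group_axioms N.group_axioms)

lemma i_closed[simp]: "x \<in> carrier G \<Longrightarrow> i x \<in> carrier N" using group_hom.hom_closed[OF i_gh] .
lemma p_closed[simp]: "x \<in> carrier G \<Longrightarrow> p x \<in> carrier N" using group_hom.hom_closed[OF p_gh] .
lemma i_mult: "x \<in> carrier G \<Longrightarrow> y \<in> carrier G \<Longrightarrow> i (x \<otimes> y) = i x \<otimes>\<^bsub>N\<^esub> i y" using group_hom.hom_mult[OF i_gh] .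
lemma p_mult: "x \<in> carrier G \<Longrightarrow> y \<in> carrier G \<Longrightarrow> p (x \<otimes> y) = p x \<otimes>\<^bsub>N\<^esub> p y" using group_hom.hom_mult[OF p_gh] .
lemma i_inv: "x \<in> carrier G \<Longrightarrow> i (inv x) = inv\<^bsub>N\<^esub> i x" using group_hom.hom_inv[OF i_gh] .
lemma p_inv: "x \<in> carrier G \<Longrightarrow> p (inv x) = inv\<^bsub>N\<^esub> p x" using group_hom.hom_inv[OF p_gh] .
lemma i_one[simp]: "i \<one> = \<one>\<^bsub>N\<^esub>" using group_hom.hom_one[OF i_gh] .
lemma p_one[simp]: "p \<one> = \<one>\<^bsub>N\<^esub>" using group_hom.hom_one[OF p_gh] .

lemma t_closed[simp]: "a \<in> carrier G \<Longrightarrow> b \<in> carrier G \<Longrightarrow> t a b \<in> carrier N"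
  by (simp add: t_def)

lemma t_rel1: "g \<in> carrier G \<Longrightarrow> a \<in> carrier G \<Longrightarrow> b \<in> carrier G \<Longrightarrow>
   cj N (i g) (t a b) = t (cj G g a) (cj G g b)"
  by (simp add: t_def rel1)
lemma t_rel2: "g \<in> carrier G \<Longrightarrow> a \<in> carrier G \<Longrightarrow> b \<in> carrier G \<Longrightarrow>
   cj N (p g) (t a b) = t (cj G g a) (cj G g b)"
  by (simp add: t_def rel2)
lemma t_mult1: "x \<in> carrier G \<Longrightarrow> y \<in> carrier G \<Longrightarrow> z \<in> carrier G \<Longrightarrow>
   t (x \<otimes> y) z = cj N (i x) (t y z) \<otimes>\<^bsub>N\<^esub> t x z"
  by (simp add: t_def i_mult N.cm_mult1)
lemma t_inv1: "x \<in> carrier G \<Longrightarrow> z \<in> carrier G \<Longrightarrow>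
   t (inv x) z = cj N (i (inv x)) (inv\<^bsub>N\<^esub> (t x z))"
  by (simp add: t_def i_inv N.cm_inv1)
lemma t_mult2: "x \<in> carrier G \<Longrightarrow> y \<in> carrier G \<Longrightarrow> z \<in> carrier G \<Longrightarrow>
   t x (y \<otimes> z) = t x y \<otimes>\<^bsub>N\<^esub> cj N (p y) (t x z)"
  by (simp add: t_def p_mult N.cm_mult2)
lemma t_inv2: "x \<in> carrier G \<Longrightarrow> y \<in> carrier G \<Longrightarrow>
   t x (inv y) = cj N (p (inv y)) (inv\<^bsub>N\<^esub> (t x y))"
  by (simp add: t_def p_inv N.cm_inv2)
lemma t_one1[simp]: "z \<in> carrier G \<Longrightarrow> t \<one> z = \<one>\<^bsub>N\<^esub>" by (simp add: t_def)
lemma t_one2[simp]: "z \<in> carrier G \<Longrightarrow> t z \<one> = \<one>\<^bsub>N\<^esub>" by (simp add: t_def)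

lemma gens_sub: "A \<subseteq> carrier G \<Longrightarrow> B \<subseteq> carrier G \<Longrightarrow> (\<Union>a\<in>A. \<Union>b\<in>B. {t a b}) \<subseteq> carrier N"
  by (auto simp: subset_iff)

lemma TT_subgroup: "A \<subseteq> carrier G \<Longrightarrow> B \<subseteq> carrier G \<Longrightarrow> subgroup (TT A B) N"
  unfolding TT_def by (rule N.generate_is_subgroup[OF gens_sub])

lemma TT_incl: "a \<in> A \<Longrightarrow> b \<in> B \<Longrightarrow> t a b \<in> TT A B"
  unfolding TT_def by (rule generate.incl) auto

lemma closed_normal:
  assumes D: "subgroup D N"
    and cl: "\<And>g d. g \<in> carrier G \<Longrightarrow> d \<in> D \<Longrightarrow> cj N (i g) d \<in> D \<and> cj N (p g) d \<in> D"
  shows "D \<lhd> N"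
proof (rule N.normal_from_gen[OF gen _ _ D])
  show "i ` carrier G \<union> p ` carrier G \<subseteq> carrier N" by auto
  show "inv\<^bsub>N\<^esub> s \<in> i ` carrier G \<union> p ` carrier G" if "s \<in> i ` carrier G \<union> p ` carrier G" for s
    using that by (auto simp flip: i_inv p_inv)
  show "cj N s d \<in> D" if "s \<in> i ` carrier G \<union> p ` carrier G" "d \<in> D" for s d
    using that cl by auto
qed

lemma TT_normal:
  assumes A: "A \<lhd> G" and B: "B \<lhd> G"
  shows "TT A B \<lhd> N"
proof -
  have As: "A \<subseteq> carrier G" and Bs: "B \<subseteq> carrier G"
    using A B normal_imp_subgroup subgroup.subset by blast+
  show ?thesis
  proof (rule closed_normal[OF TT_subgroup[OF As Bs]])
    fix g d assume g: "g \<in> carrier G" and d: "d \<in> TT A B"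
    have "cj N (i g) s \<in> TT A B \<and> cj N (p g) s \<in> TT A B"
      if sA: "s \<in> (\<Union>a\<in>A. \<Union>b\<in>B. {t a b})" for s
    proof -
      obtain a b where ab: "a \<in> A" "b \<in> B" "s = t a b" using sA by auto
      have "a \<in> carrier G" "b \<in> carrier G" using ab As Bs by auto
      then show ?thesis using ab g G.normal_cj[OF A g ab(1)] G.normal_cj[OF B g ab(2)]
        by (simp add: t_rel1 t_rel2 TT_incl)
    qed
    hence h1: "\<And>s. s \<in> (\<Union>a\<in>A. \<Union>b\<in>B. {t a b}) \<Longrightarrow> cj N (i g) s \<in> TT A B"
      and h2: "\<And>s. s \<in> (\<Union>a\<in>A. \<Union>b\<in>B. {t a b}) \<Longrightarrow> cj N (p g) s \<in> TT A B" by blast+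
    have "cj N (i g) d \<in> TT A B" unfolding TT_def
      by (rule N.generate_cj_closed[OF gens_sub[OF As Bs] i_closed[OF g] h1[unfolded TT_def] d[unfolded TT_def]])
    moreover have "cj N (p g) d \<in> TT A B" unfolding TT_def
      by (rule N.generate_cj_closed[OF gens_sub[OF As Bs] p_closed[OF g] h2[unfolded TT_def] d[unfolded TT_def]])
    ultimately show "cj N (i g) d \<in> TT A B \<and> cj N (p g) d \<in> TT A B" by blast
  qed
qed

lemma TT_ip:
  assumes As: "A \<subseteq> carrier G" and Bs: "B \<subseteq> carrier G" and g: "g \<in> carrier G"
    and y: "y \<in> TT A B"
  shows "cj N (i g) y = cj N (p g) y"
  using y unfolding TT_def
proof (induct rule: generate.induct)
  case one then show ?case using g by (simp add: N.gsimps)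
next
  case (incl h) then show ?case using g As Bs by (auto simp: t_rel1 t_rel2 subset_iff)
next
  case (inv h) then show ?case using g As Bs by (auto simp: t_rel1 t_rel2 subset_iff N.cj_inv)
next
  case (eng h1 h2)
  have "h1 \<in> carrier N" "h2 \<in> carrier N" using eng N.generate_in_carrier[OF gens_sub[OF As Bs]] by auto
  then show ?case using eng g by (simp add: N.cj_mult)
qed

lemma t_gen_incl:
  assumes D: "D \<lhd> N" and P: "P \<subseteq> carrier G" and Q: "Q \<subseteq> carrier G"
    and PQ: "\<And>x y. x \<in> P \<Longrightarrow> y \<in> Q \<Longrightarrow> t x y \<in> D"
  shows "TT (generate G P) (generate G Q) \<subseteq> D"
proof -
  have Ds: "subgroup D N" using D normal_imp_subgroup by blast
  have step1: "\<forall>y\<in>Q. t u y \<in> D" if u: "u \<in> generate G P" for u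
    using u
  proof (induct rule: generate.induct)
    case one then show ?case using Q Ds by (auto simp: subgroup.one_closed subset_iff)
  next
    case (incl h) then show ?case using PQ by blast
  next
    case (inv h)
    have "h \<in> carrier G" using inv P by auto
    moreover have "\<forall>y\<in>Q. y \<in> carrier G" using Q by auto
    ultimately show ?case using PQ inv D Ds
      by (auto simp: t_inv1 intro!: N.normal_cj subgroup.m_inv_closed[OF Ds])
  next
    case (eng h1 h2)
    have "h1 \<in> carrier G" "h2 \<in> carrier G" using eng P G.generate_in_carrier by auto
    then show ?case using eng D Ds Q
      by (auto simp: t_mult1 subset_iff intro!: N.normal_cj subgroup.m_closed[OF Ds])
  qed
  have step2: "\<forall>u\<in>generate G P. t u v \<in> D" if v: "v \<in> generate G Q" for v
    using v
  proof (induct rule: generate.induct)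
    case one then show ?case using P Ds G.generate_in_carrier by (auto simp: subgroup.one_closed)
  next
    case (incl h) then show ?case using step1 by blast
  next
    case (inv h)
    have "h \<in> carrier G" using inv Q by auto
    moreover have "\<forall>u\<in>generate G P. u \<in> carrier G" using P G.generate_in_carrier by auto
    ultimately show ?case using step1 inv D Ds
      by (auto simp: t_inv2 intro!: N.normal_cj subgroup.m_inv_closed[OF Ds])
  next
    case (eng h1 h2)
    have "h1 \<in> carrier G" "h2 \<in> carrier G" using eng Q G.generate_in_carrier by auto
    then show ?case using eng D Ds P G.generate_in_carrier
      by (auto simp: t_mult2 subset_iff intro!: N.normal_cj subgroup.m_closed[OF Ds])
  qed
  show ?thesis unfolding TT_def
    by (rule N.generate_subgroup_incl[OF _ Ds]) (use step2 in auto)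
qed

end

lemma (in group) key_alg:
  assumes c: "xX \<in> carrier G" "yY \<in> carrier G" "zZ \<in> carrier G" "wW \<in> carrier G"
    and eq: "zZ \<otimes> wW = xX \<otimes> yY"
  shows "cj G xX (inv yY) \<otimes> zZ = xX \<otimes> inv wW"
proof -
  have "zZ = (xX \<otimes> yY) \<otimes> inv wW"
    apply (rule iffD2[OF inv_solve_right]) using eq c by auto
  then show ?thesis using c by (simp add: gsimps)
qed

context nu_setting begin

abbreviation TG where "TG \<equiv> TT (carrier G) (carrier G)"

lemma TG_normal: "TG \<lhd> N"
  by (rule TT_normal) (simp_all add: G.normal_self)

lemma TG_cj: "x \<in> carrier N \<Longrightarrow> y \<in> TG \<Longrightarrow> cj N x y \<in> TG"
  using N.normal_cj[OF TG_normal] .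

lemma TG_carrier: "y \<in> TG \<Longrightarrow> y \<in> carrier N"
  by (rule subgroup.mem_carrier[OF TT_subgroup[OF subset_refl subset_refl]])

lemma TG_inv: "y \<in> TG \<Longrightarrow> inv\<^bsub>N\<^esub> y \<in> TG"
  by (rule subgroup.m_inv_closed[OF TT_subgroup[OF subset_refl subset_refl]])

lemma TG_ip: "g \<in> carrier G \<Longrightarrow> y \<in> TG \<Longrightarrow> cj N (i g) y = cj N (p g) y"
  by (rule TT_ip[OF subset_refl subset_refl])

lemma t_TG: "a \<in> carrier G \<Longrightarrow> b \<in> carrier G \<Longrightarrow> t a b \<in> TG"
  by (rule TT_incl)

lemma t_comm_p:
  assumes a: "a \<in> carrier G" and b: "b \<in> carrier G" and c: "c \<in> carrier G"
  shows "t (cm G a b) c = cm N (t a b) (p c)"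
proof -
  define e where "e = cj G (inv b) c"
  define w where "w = inv\<^bsub>N\<^esub> (t a e)"
  define xX where "xX = t a b"
  define yY where "yY = t (cj G b a) c"
  define zZ where "zZ = t a c"
  define wW where "wW = t (cj G c a) (cj G c b)"
  have e: "e \<in> carrier G" using b c by (simp add: e_def)
  have w: "w \<in> TG" "w \<in> carrier N" using a e t_TG TG_inv TG_carrier by (auto simp: w_def)
  have cs: "xX \<in> carrier N" "yY \<in> carrier N" "zZ \<in> carrier N" "wW \<in> carrier N"
    using a b c by (simp_all add: xX_def yY_def zZ_def wW_def)
  have be: "cj G b e = c" using b c by (simp add: e_def)
  have 1: "t (cm G a b) c = cj N (i a) (t (cj G b (inv a)) c) \<otimes>\<^bsub>N\<^esub> t a c"
    using a b c by (simp add: G.cm_eq t_mult1)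
  have 2: "t (cj G b (inv a)) c = cj N (i b) (t (inv a) e)"
    using t_rel1[of b "inv a" e] a b e be by simp
  have 3: "t (inv a) e = cj N (i (inv a)) w"
    using a e by (simp add: t_inv1 w_def)
  have z: "cj N (i (inv a)) w \<in> TG" using a w by (simp add: TG_cj)
  have 4: "cj N (i b) (cj N (i (inv a)) w) = cj N (p b) (cj N (i (inv a)) w)"
    using TG_ip[OF b z] .
  have 5: "cj N (i a) (cj N (p b) (cj N (i (inv a)) w)) = cj N xX (cj N (p b) w)"
    using a b w by (simp add: xX_def t_def i_inv N.gsimps)
  have 6: "cj N (p b) w = inv\<^bsub>N\<^esub> yY"
    using a b e be by (simp add: w_def yY_def N.cj_inv t_rel2)
  have star: "t (cm G a b) c = cj N xX (inv\<^bsub>N\<^esub> yY) \<otimes>\<^bsub>N\<^esub> zZ"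
    using 1 2 3 4 5 6 by (simp add: zZ_def)
  have 7: "t a (c \<otimes> b) = zZ \<otimes>\<^bsub>N\<^esub> wW"
    using a b c by (simp add: t_mult2 t_rel2 zZ_def wW_def)
  have cb: "c \<otimes> b = b \<otimes> e" using b c by (simp add: e_def G.gsimps)
  have 8: "t a (b \<otimes> e) = xX \<otimes>\<^bsub>N\<^esub> yY"
    using a b e be by (simp add: t_mult2 t_rel2 xX_def yY_def)
  have eq: "zZ \<otimes>\<^bsub>N\<^esub> wW = xX \<otimes>\<^bsub>N\<^esub> yY" using 7 8 cb by simp
  have "cm N (t a b) (p c) = xX \<otimes>\<^bsub>N\<^esub> inv\<^bsub>N\<^esub> wW"
    using a b c by (simp add: N.cm_eq xX_def wW_def N.cj_inv t_rel2)
  then show ?thesis using star N.key_alg[OF cs eq] by simp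
qed

lemma t_cj_TG:
  assumes c: "c \<in> carrier G" and d: "d \<in> carrier G" and v: "v \<in> TG"
  shows "cj N (t c d) v = cj N (p (cm G c d)) v"
proof -
  have vc: "v \<in> carrier N" using TG_carrier v .
  define v1 where "v1 = cj N (p (inv d)) v"
  define v2 where "v2 = cj N (i (inv c)) v1"
  define v3 where "v3 = cj N (p d) v2"
  have v1: "v1 \<in> TG" using v d by (simp add: v1_def TG_cj)
  have v2: "v2 \<in> TG" using v1 c by (simp add: v2_def TG_cj)
  have v3: "v3 \<in> TG" using v2 d by (simp add: v3_def TG_cj)
  have e1: "v2 = cj N (p (inv c)) v1" using TG_ip[OF _ v1, of "inv c"] c by (simp add: v2_def)
  have e2: "cj N (i c) v3 = cj N (p c) v3" using TG_ip[OF c v3] .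
  have "cj N (t c d) v = cj N (i c) v3"
    using c d vc by (simp add: t_def v3_def v2_def v1_def i_inv p_inv N.gsimps)
  also have "\<dots> = cj N (p c) v3" by (rule e2)
  also have "\<dots> = cj N (p (cm G c d)) v"
    using c d vc by (simp add: e1 v3_def v1_def p_inv p_mult cm_def N.gsimps)
  finally show ?thesis .
qed

lemma t_comm_t:
  assumes a: "a \<in> carrier G" and b: "b \<in> carrier G" and c: "c \<in> carrier G" and d: "d \<in> carrier G"
  shows "cm N (t a b) (t c d) = t (cm G a b) (cm G c d)"
proof -
  have xx: "inv\<^bsub>N\<^esub> (t a b) \<in> TG" using a b t_TG TG_inv by blast
  have "cm N (t a b) (t c d) = t a b \<otimes>\<^bsub>N\<^esub> cj N (t c d) (inv\<^bsub>N\<^esub> (t a b))"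
    using a b c d by (simp add: N.cm_eq)
  also have "\<dots> = t a b \<otimes>\<^bsub>N\<^esub> cj N (p (cm G c d)) (inv\<^bsub>N\<^esub> (t a b))"
    using t_cj_TG[OF c d xx] by simp
  also have "\<dots> = cm N (t a b) (p (cm G c d))"
    using a b c d by (simp add: N.cm_eq)
  also have "\<dots> = t (cm G a b) (cm G c d)"
    using t_comm_p a b c d by simp
  finally show ?thesis .
qed

end

lemma (in group) derived_eq_comm: "derived G H = comm_subgroup G H H"
  by (simp add: derived_def comm_subgroup_def comm_set_def)

lemma (in group) lcs_normal: "H \<lhd> G \<Longrightarrow> lcs G H n \<lhd> G \<and> lcs G H (Suc n) \<lhd> G"
proof (induct n)
  case 0 then show ?case by simp
next
  case (Suc n) then show ?case by (simp add: comm_subgroup_normal)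
qed

lemma (in group) derived_iter_normal: "derived_iter G n (carrier G) \<lhd> G"
  by (induct n) (simp_all add: derived_iter_def normal_self derived_is_normal)

lemma (in group) normal_sub: "H \<lhd> G \<Longrightarrow> H \<subseteq> carrier G"
  using normal_imp_subgroup subgroup.subset by blast

lemma (in group) cm_in_comm_set: "a \<in> A \<Longrightarrow> b \<in> B \<Longrightarrow> cm G a b \<in> comm_set G A B"
  by (auto simp: comm_set_def cm_def)

lemma (in group) cm_in_comm_subgroup: "a \<in> A \<Longrightarrow> b \<in> B \<Longrightarrow> cm G a b \<in> comm_subgroup G A B"
  unfolding comm_subgroup_def by (rule generate.incl, rule cm_in_comm_set)

lemma (in group) cm_in_derived: "a \<in> A \<Longrightarrow> b \<in> A \<Longrightarrow> cm G a b \<in> derived G A"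
  using cm_in_comm_subgroup by (simp add: derived_eq_comm)

context nu_setting begin

lemma TT_gen: "TT A B = generate N (\<Union>a\<in>A. \<Union>b\<in>B. {t a b})" by (simp add: TT_def)

lemma derived_TT:
  assumes H: "H \<lhd> G"
  shows "derived N (TT H H) = TT (derived G H) (derived G H)"
proof
  have Hs: "H \<subseteq> carrier G" using G.normal_sub[OF H] .
  have dH: "derived G H \<lhd> G" using G.derived_is_normal[OF H] .
  show "derived N (TT H H) \<subseteq> TT (derived G H) (derived G H)"
    unfolding N.derived_eq_comm TT_gen[of H H]
  proof (rule N.comm_gen_incl[OF TT_normal[OF dH dH] gens_sub[OF Hs Hs] gens_sub[OF Hs Hs]])
    fix x y assume "x \<in> (\<Union>a\<in>H. \<Union>b\<in>H. {t a b})" "y \<in> (\<Union>a\<in>H. \<Union>b\<in>H. {t a b})"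
    then obtain a b c d where abcd: "a \<in> H" "b \<in> H" "c \<in> H" "d \<in> H" "x = t a b" "y = t c d" by blast
    have "a \<in> carrier G" "b \<in> carrier G" "c \<in> carrier G" "d \<in> carrier G" using abcd Hs by auto
    then have "cm N x y = t (cm G a b) (cm G c d)" using abcd t_comm_t by simp
    then show "cm N x y \<in> TT (derived G H) (derived G H)"
      using abcd by (simp add: TT_incl G.cm_in_derived)
  qed
  have D: "derived N (TT H H) \<lhd> N" using N.derived_is_normal[OF TT_normal[OF H H]] .
  have Ps: "derived_set G H \<subseteq> carrier G" using G.derived_set_in_carrier[OF Hs] .
  have "TT (generate G (derived_set G H)) (generate G (derived_set G H)) \<subseteq> derived N (TT H H)"
  proof (rule t_gen_incl[OF D Ps Ps])
    fix x y assume "x \<in> derived_set G H" "y \<in> derived_set G H"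
    then obtain a b c d where abcd: "a \<in> H" "b \<in> H" "c \<in> H" "d \<in> H" "x = cm G a b" "y = cm G c d"
      by (auto simp: cm_def)
    have "a \<in> carrier G" "b \<in> carrier G" "c \<in> carrier G" "d \<in> carrier G" using abcd Hs by auto
    then have "t x y = cm N (t a b) (t c d)" using abcd t_comm_t by simp
    then show "t x y \<in> derived N (TT H H)"
      using abcd by (simp add: N.cm_in_derived TT_incl)
  qed
  then show "TT (derived G H) (derived G H) \<subseteq> derived N (TT H H)" by (simp add: derived_def)
qed

lemma part1: "derived_iter N n TG = TT (derived_iter G n (carrier G)) (derived_iter G n (carrier G))"
proof (induct n)
  case 0 then show ?case by (simp add: derived_iter_def)
next
  case (Suc n)
  have "derived_iter N (Suc n) TG = derived N (derived_iter N n TG)" by (simp add: derived_iter_def)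
  also have "\<dots> = TT (derived_iter G (Suc n) (carrier G)) (derived_iter G (Suc n) (carrier G))"
    using Suc derived_TT[OF G.derived_iter_normal[of n]] by (simp add: derived_iter_def)
  finally show ?case .
qed


abbreviation Gp where "Gp \<equiv> derived G (carrier G)"

lemma lcs_step:
  assumes Ln: "Ln \<lhd> G"
  defines "C \<equiv> comm_subgroup N (TT Ln Gp) TG"
  shows "TT (comm_subgroup G Ln Gp) Gp = C \<and> TT Gp (comm_subgroup G Ln Gp) = C"
proof -
  have Gpn: "Gp \<lhd> G" by (rule G.derived_self_is_normal)
  have Ln': "comm_subgroup G Ln Gp \<lhd> G" using G.comm_subgroup_normal[OF Ln Gpn] .
  have Lns: "Ln \<subseteq> carrier G" and Gps: "Gp \<subseteq> carrier G" and Ln's: "comm_subgroup G Ln Gp \<subseteq> carrier G"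
    using G.normal_sub Ln Gpn Ln' by auto
  have TLn: "TT Ln Gp \<lhd> N" using TT_normal[OF Ln Gpn] .
  have Cn: "C \<lhd> N" unfolding C_def using N.comm_subgroup_normal[OF TLn TG_normal] .
  have Cs: "subgroup C N" using Cn normal_imp_subgroup by blast
  have key: "\<And>a b c d. a \<in> Ln \<Longrightarrow> b \<in> Gp \<Longrightarrow> c \<in> carrier G \<Longrightarrow> d \<in> carrier G \<Longrightarrow>
      cm N (t a b) (t c d) = t (cm G a b) (cm G c d)"
    using Lns Gps t_comm_t by (meson subsetD)
  have inC: "\<And>a b c d. a \<in> Ln \<Longrightarrow> b \<in> Gp \<Longrightarrow> c \<in> carrier G \<Longrightarrow> d \<in> carrier G \<Longrightarrow>
      cm N (t a b) (t c d) \<in> C"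
    unfolding C_def by (rule N.cm_in_comm_subgroup) (auto intro: TT_incl)
  have sw: "\<And>a b c d. a \<in> Ln \<Longrightarrow> b \<in> Gp \<Longrightarrow> c \<in> carrier G \<Longrightarrow> d \<in> carrier G \<Longrightarrow>
      cm N (t c d) (t a b) = inv\<^bsub>N\<^esub> (cm N (t a b) (t c d))"
  proof -
    fix a b c d assume h: "a \<in> Ln" "b \<in> Gp" "c \<in> carrier G" "d \<in> carrier G"
    then have "a \<in> carrier G" "b \<in> carrier G" using Lns Gps by auto
    then show "cm N (t c d) (t a b) = inv\<^bsub>N\<^esub> (cm N (t a b) (t c d))" using h by (simp add: N.cm_swap)
  qed
  have C1: "C \<subseteq> TT (comm_subgroup G Ln Gp) Gp"
    unfolding C_def TT_gen[of Ln Gp] TT_gen[of "carrier G" "carrier G"]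
  proof (rule N.comm_gen_incl[OF TT_normal[OF Ln' Gpn] gens_sub[OF Lns Gps] gens_sub])
    fix x y assume "x \<in> (\<Union>a\<in>Ln. \<Union>b\<in>Gp. {t a b})" "y \<in> (\<Union>a\<in>carrier G. \<Union>b\<in>carrier G. {t a b})"
    then obtain a b c d where abcd: "a \<in> Ln" "b \<in> Gp" "c \<in> carrier G" "d \<in> carrier G" "x = t a b" "y = t c d" by blast
    show "cm N x y \<in> TT (comm_subgroup G Ln Gp) Gp"
      using abcd key[OF abcd(1-4)] by (simp add: TT_incl G.cm_in_comm_subgroup G.cm_in_derived)
  qed simp_all
  have C2: "C \<subseteq> TT Gp (comm_subgroup G Ln Gp)"
    unfolding C_def TT_gen[of Ln Gp] TT_gen[of "carrier G" "carrier G"]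
  proof (rule N.comm_gen_incl[OF TT_normal[OF Gpn Ln'] gens_sub[OF Lns Gps] gens_sub])
    fix x y assume "x \<in> (\<Union>a\<in>Ln. \<Union>b\<in>Gp. {t a b})" "y \<in> (\<Union>a\<in>carrier G. \<Union>b\<in>carrier G. {t a b})"
    then obtain a b c d where abcd: "a \<in> Ln" "b \<in> Gp" "c \<in> carrier G" "d \<in> carrier G" "x = t a b" "y = t c d" by blast
    have ac: "a \<in> carrier G" "b \<in> carrier G" using abcd Lns Gps by auto
    have "cm N x y = inv\<^bsub>N\<^esub> (cm N (t c d) (t a b))"
      using abcd ac by (simp add: N.cm_swap)
    also have "cm N (t c d) (t a b) = t (cm G c d) (cm G a b)"
      using abcd ac t_comm_t by simp
    finally have "cm N x y = inv\<^bsub>N\<^esub> t (cm G c d) (cm G a b)" .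
    moreover have "t (cm G c d) (cm G a b) \<in> TT Gp (comm_subgroup G Ln Gp)"
      using abcd by (simp add: TT_incl G.cm_in_comm_subgroup G.cm_in_derived)
    ultimately show "cm N x y \<in> TT Gp (comm_subgroup G Ln Gp)"
      using subgroup.m_inv_closed[OF TT_subgroup[OF Gps Ln's]] by simp
  qed simp_all
  have Ps: "comm_set G Ln Gp \<subseteq> carrier G" using Lns Gps by (auto simp: comm_set_def subset_iff)
  have Qs: "derived_set G (carrier G) \<subseteq> carrier G" using G.derived_set_in_carrier by simp
  have "TT (generate G (comm_set G Ln Gp)) (generate G (derived_set G (carrier G))) \<subseteq> C"
  proof (rule t_gen_incl[OF Cn Ps Qs])
    fix x y assume "x \<in> comm_set G Ln Gp" "y \<in> derived_set G (carrier G)"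
    then obtain a b c d where abcd: "a \<in> Ln" "b \<in> Gp" "c \<in> carrier G" "d \<in> carrier G" "x = cm G a b" "y = cm G c d"
      by (auto simp: comm_set_def cm_def)
    show "t x y \<in> C" using key[OF abcd(1-4)] inC[OF abcd(1-4)] abcd by simp
  qed
  then have C3: "TT (comm_subgroup G Ln Gp) Gp \<subseteq> C" by (simp add: comm_subgroup_def derived_def)
  have "TT (generate G (derived_set G (carrier G))) (generate G (comm_set G Ln Gp)) \<subseteq> C"
  proof (rule t_gen_incl[OF Cn Qs Ps])
    fix x y assume "x \<in> derived_set G (carrier G)" "y \<in> comm_set G Ln Gp"
    then obtain a b c d where abcd: "a \<in> Ln" "b \<in> Gp" "c \<in> carrier G" "d \<in> carrier G" "y = cm G a b" "x = cm G c d"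
      by (auto simp: comm_set_def cm_def)
    have ac: "a \<in> carrier G" "b \<in> carrier G" using abcd Lns Gps by auto
    have "t x y = cm N (t c d) (t a b)" using abcd ac t_comm_t by simp
    also have "\<dots> = inv\<^bsub>N\<^esub> (cm N (t a b) (t c d))" using sw[OF abcd(1-4)] .
    finally show "t x y \<in> C" using inC[OF abcd(1-4)] subgroup.m_inv_closed[OF Cs] by simp
  qed
  then have C4: "TT Gp (comm_subgroup G Ln Gp) \<subseteq> C" by (simp add: comm_subgroup_def derived_def)
  show ?thesis using C1 C2 C3 C4 by blast
qed

lemma part2_aux:
  "lcs N TG (Suc (Suc m)) = TT (lcs G Gp (Suc m)) Gp \<and> lcs N TG (Suc (Suc m)) = TT Gp (lcs G Gp (Suc m))"
proof (induct m)
  case 0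
  have "lcs N TG (Suc (Suc 0)) = derived N TG" by (simp add: N.derived_eq_comm)
  also have "\<dots> = TT Gp Gp" by (rule derived_TT[OF G.normal_self])
  finally show ?case by simp
next
  case (Suc m)
  have Ln: "lcs G Gp (Suc m) \<lhd> G" using G.lcs_normal[OF G.derived_self_is_normal, of m] by simp
  have "lcs N TG (Suc (Suc (Suc m))) = comm_subgroup N (TT (lcs G Gp (Suc m)) Gp) TG"
    using Suc by simp
  then show ?case using lcs_step[OF Ln] by simp
qed

lemma part2: "n \<ge> 1 \<Longrightarrow> lcs N TG (n + 1) = TT (lcs G Gp n) Gp \<and> lcs N TG (n + 1) = TT Gp (lcs G Gp n)"
  using part2_aux[of "n - 1"] by (cases n) auto

end

context group begin

lemma nu_letter[simp]: "g \<in> carrier G \<Longrightarrow> nu_class G [(g,s)] \<in> carrier (nu G)"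
  by (auto simp: nu_carrier)

lemma nu_letter_mult: "g \<in> carrier G \<Longrightarrow> h \<in> carrier G \<Longrightarrow>
   nu_class G [(g,s)] \<otimes>\<^bsub>nu G\<^esub> nu_class G [(h,s)] = nu_class G [(g \<otimes> h, s)]"
  by (simp add: nu_mult class_eq nu_eqv.mult)

lemma nu_letter_inv: "g \<in> carrier G \<Longrightarrow> inv\<^bsub>nu G\<^esub> (nu_class G [(g,s)]) = nu_class G [(inv g, s)]"
proof (rule group.inv_equality[OF nu_group])
  assume g: "g \<in> carrier G"
  have "nu_eqv G (winv G [(g,s)] @ [(g,s)]) []" using winv_cancel[of "[(g,s)]"] g by simp
  then show "nu_class G [(inv g, s)] \<otimes>\<^bsub>nu G\<^esub> nu_class G [(g, s)] = \<one>\<^bsub>nu G\<^esub>"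
    using g by (simp add: nu_mult nu_one class_eq)
qed simp_all

lemma nu_inc_hom: "nu_inc G \<in> hom G (nu G)"
  by (rule homI) (simp_all add: nu_inc_def nu_letter_mult)

lemma nu_phi_hom: "nu_phi G \<in> hom G (nu G)"
  by (rule homI) (simp_all add: nu_phi_def nu_letter_mult)

lemma nu_rel1: "g1 \<in> carrier G \<Longrightarrow> g2 \<in> carrier G \<Longrightarrow> g3 \<in> carrier G \<Longrightarrow>
   cj (nu G) (nu_inc G g3) (cm (nu G) (nu_inc G g1) (nu_phi G g2))
   = cm (nu G) (nu_inc G (cj G g3 g1)) (nu_phi G (cj G g3 g2))"
  using nu_eqv.rel1[of g1 G g2 g3]
  by (simp add: cj_def cm_def nu_inc_def nu_phi_def nu_letter_inv nu_mult wconj_def wcomm_def class_eq)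

lemma nu_rel2: "g1 \<in> carrier G \<Longrightarrow> g2 \<in> carrier G \<Longrightarrow> g3 \<in> carrier G \<Longrightarrow>
   cj (nu G) (nu_phi G g3) (cm (nu G) (nu_inc G g1) (nu_phi G g2))
   = cm (nu G) (nu_inc G (cj G g3 g1)) (nu_phi G (cj G g3 g2))"
  using nu_eqv.rel2[of g1 G g2 g3]
  by (simp add: cj_def cm_def nu_inc_def nu_phi_def nu_letter_inv nu_mult wconj_def wcomm_def class_eq)

lemma nu_gen: "carrier (nu G) = generate (nu G) (nu_inc G ` carrier G \<union> nu_phi G ` carrier G)"
proof
  show "generate (nu G) (nu_inc G ` carrier G \<union> nu_phi G ` carrier G) \<subseteq> carrier (nu G)"
  proof -
    have sub: "nu_inc G ` carrier G \<union> nu_phi G ` carrier G \<subseteq> carrier (nu G)"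
      by (auto simp: nu_inc_def nu_phi_def)
    show ?thesis using group.generate_in_carrier[OF nu_group sub] by blast
  qed
  have "nu_class G w \<in> generate (nu G) (nu_inc G ` carrier G \<union> nu_phi G ` carrier G)"
    if "w \<in> nu_words G" for w
    using that
  proof (induct w)
    case Nil then show ?case using generate.one[of "nu G"] by (simp add: nu_one)
  next
    case (Cons x w)
    obtain g s where x: "x = (g,s)" by (cases x)
    have g: "g \<in> carrier G" "w \<in> nu_words G" using Cons x by auto
    have l: "nu_class G [(g,s)] \<in> generate (nu G) (nu_inc G ` carrier G \<union> nu_phi G ` carrier G)"
      by (rule generate.incl) (cases s, auto simp: nu_inc_def nu_phi_def g)
    have "nu_class G ((g,s) # w) = nu_class G [(g,s)] \<otimes>\<^bsub>nu G\<^esub> nu_class G w"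
      using g by (simp add: nu_mult)
    then show ?case using generate.eng[OF l Cons(1)[OF g(2)]] x by simp
  qed
  then show "carrier (nu G) \<subseteq> generate (nu G) (nu_inc G ` carrier G \<union> nu_phi G ` carrier G)"
    by (auto simp: nu_carrier)
qed

lemma nu_setting: "nu_setting G (nu G) (nu_inc G) (nu_phi G)"
  by (intro nu_setting.intro nu_setting_axioms.intro group_axioms nu_group
      nu_inc_hom nu_phi_hom nu_rel1 nu_rel2 nu_gen)

end

theorem proposition1p3:
  fixes G :: "('a, 'b) monoid_scheme"
  assumes "group G"
  shows "(\<forall>n::nat. derived_iter (nu G) n (nu_tensor G (carrier G) (carrier G))
                = nu_tensor G (derived_iter G n (carrier G)) (derived_iter G n (carrier G)))
       \<and> (\<forall>n::nat. n \<ge> 1 \<longrightarrow>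
            lcs (nu G) (nu_tensor G (carrier G) (carrier G)) (n + 1)
              = nu_tensor G (lcs G (derived G (carrier G)) n) (derived G (carrier G))
          \<and> lcs (nu G) (nu_tensor G (carrier G) (carrier G)) (n + 1)
              = nu_tensor G (derived G (carrier G)) (lcs G (derived G (carrier G)) n))"
proof -
  interpret S: nu_setting G "nu G" "nu_inc G" "nu_phi G"
    using group.nu_setting[OF assms] .
  have T: "\<And>A B. nu_tensor G A B = S.TT A B"
    by (simp add: nu_tensor_def S.TT_def S.t_def cm_def)
  show ?thesis unfolding T using S.part1 S.part2 by blast
qed

end
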